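(* Let $A=(A,\wedge,\vee,\cdot,\to,1)$ be a $\mathsf{DLCMI}$ and $a,b\in A$. Then $(a,b)\in R(a,b)$, and $R(a,b)$ is a congruence of the lattice reduct $(A,\wedge,\vee)$ of $A$.
   Context: An algebra $(A,\wedge,\vee,\cdot,\to,1)$ of type $(2,2,2,2,0)$ is a $\mathsf{DLCMI}$ if for all $a,b,c\in A$: (1) $(A,\wedge,\vee)$ is a distributive lattice; (2) $1$ is its largest element; (3) $(A,\cdot,1)$ is a commutative monoid; (4) $(a\to b)\wedge(a\to c)=a\to(b\wedge c)$; (5) $(a\to c)\wedge(b\to c)=(a\vee b)\to c$; (6) $a\to a=1$; (7) $(a\vee b)\cdot c=(a\cdot c)\vee(b\cdot c)$; (8) $(a\to b)\cdot(b\to c)\le a\to c$; (9) $a\to b\le (a\cdot c)\to(b\cdot c)$. Notation: $x^0=1$, $x^{m}=x\cdot x^{m-1}$; $\square(x)=1\to x$, $\square^0(x)=x$, $\square^{m}$ the $m$-fold iterate; $x\leftrightarrow y=(x\to y)\wedge(y\to x)$; $t_n(a,b)=\square^0(a\leftrightarrow b)\wedge\square(a\leftrightarrow b)\wedge\cdots\wedge\square^n(a\leftrightarrow b)$; $t_n^k(a,b)=(t_n(a,b))^k$. $R(a,b)$ is the binary relation on $A$ with $(c,d)\in R(a,b)$ iff there exist natural numbers $n,k$ such that (C1) $t_n^k(a,b)\cdot(c\wedge a\wedge b)\le d\wedge a\wedge b$ and $t_n^k(a,b)\cdot(d\wedge a\wedge b)\le c\wedge a\wedge b$; (C2) $t_n^k(a,b)\cdot(c\vee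 a\vee b)\le d\vee a\vee b$ and $t_n^k(a,b)\cdot(d\vee a\vee b)\le c\vee a\vee b$; (C3) $t_n^k(a,b)\le c\leftrightarrow d$. *)

theory Defs
  imports Main
begin

definition lat_le :: "('a \<Rightarrow> 'a \<Rightarrow> 'a) \<Rightarrow> 'a \<Rightarrow> 'a \<Rightarrow> bool" where
  "lat_le meet x y \<longleftrightarrow> meet x y = x"

definition DLCMI :: "('a \<Rightarrow> 'a \<Rightarrow> 'a) \<Rightarrow> ('a \<Rightarrow> 'a \<Rightarrow> 'a) \<Rightarrow> ('a \<Rightarrow> 'a \<Rightarrow> 'a)
     \<Rightarrow> ('a \<Rightarrow> 'a \<Rightarrow> 'a) \<Rightarrow> 'a \<Rightarrow> bool" where
  "DLCMI meet join mult imp one \<longleftrightarrow>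
     \<comment> \<open>(1) distributive lattice\<close>
     (\<forall>x y. meet x y = meet y x) \<and> (\<forall>x y. join x y = join y x) \<and>
     (\<forall>x y z. meet (meet x y) z = meet x (meet y z)) \<and>
     (\<forall>x y z. join (join x y) z = join x (join y z)) \<and>
     (\<forall>x y. meet x (join x y) = x) \<and> (\<forall>x y. join x (meet x y) = x) \<and>
     (\<forall>x y z. meet x (join y z) = join (meet x y) (meet x z)) \<and>
     \<comment> \<open>(2) one is the largest element\<close>
     (\<forall>x. lat_le meet x one) \<and>
     \<comment> \<open>(3) commutative monoid\<close>
     (\<forall>x y z. mult (mult x y) z = mult x (mult y z)) \<and>
     (\<forall>x y. mult x y = mult y x) \<and> (\<forall>x. mult x one = x) \<and>
     \<comment> \<open>(4)\<close>
     (\<forall>a b c. meet (imp a b) (imp a c) = imp a (meet b c)) \<and>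
     \<comment> \<open>(5)\<close>
     (\<forall>a b c. meet (imp a c) (imp b c) = imp (join a b) c) \<and>
     \<comment> \<open>(6)\<close>
     (\<forall>a. imp a a = one) \<and>
     \<comment> \<open>(7)\<close>
     (\<forall>a b c. mult (join a b) c = join (mult a c) (mult b c)) \<and>
     \<comment> \<open>(8)\<close>
     (\<forall>a b c. lat_le meet (mult (imp a b) (imp b c)) (imp a c)) \<and>
     \<comment> \<open>(9)\<close>
     (\<forall>a b c. lat_le meet (imp a b) (imp (mult a c) (mult b c)))"

primrec mpow :: "('a \<Rightarrow> 'a \<Rightarrow> 'a) \<Rightarrow> 'a \<Rightarrow> 'a \<Rightarrow> nat \<Rightarrow> 'a" where
  "mpow mult one x 0 = one"
| "mpow mult one x (Suc m) = mult x (mpow mult one x m)"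

primrec boxn :: "('a \<Rightarrow> 'a \<Rightarrow> 'a) \<Rightarrow> 'a \<Rightarrow> nat \<Rightarrow> 'a \<Rightarrow> 'a" where
  "boxn imp one 0 x = x"
| "boxn imp one (Suc m) x = imp one (boxn imp one m x)"

definition biimp :: "('a \<Rightarrow> 'a \<Rightarrow> 'a) \<Rightarrow> ('a \<Rightarrow> 'a \<Rightarrow> 'a) \<Rightarrow> 'a \<Rightarrow> 'a \<Rightarrow> 'a" where
  "biimp meet imp x y = meet (imp x y) (imp y x)"

primrec tn :: "('a \<Rightarrow> 'a \<Rightarrow> 'a) \<Rightarrow> ('a \<Rightarrow> 'a \<Rightarrow> 'a) \<Rightarrow> 'a \<Rightarrow> nat \<Rightarrow> 'a \<Rightarrow> 'a \<Rightarrow> 'a" where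
  "tn meet imp one 0 a b = biimp meet imp a b"
| "tn meet imp one (Suc n) a b =
     meet (tn meet imp one n a b) (boxn imp one (Suc n) (biimp meet imp a b))"

definition tnk :: "('a \<Rightarrow> 'a \<Rightarrow> 'a) \<Rightarrow> ('a \<Rightarrow> 'a \<Rightarrow> 'a) \<Rightarrow> ('a \<Rightarrow> 'a \<Rightarrow> 'a) \<Rightarrow> 'a
     \<Rightarrow> nat \<Rightarrow> nat \<Rightarrow> 'a \<Rightarrow> 'a \<Rightarrow> 'a" where
  "tnk meet mult imp one n k a b = mpow mult one (tn meet imp one n a b) k"

definition Rrel :: "('a \<Rightarrow> 'a \<Rightarrow> 'a) \<Rightarrow> ('a \<Rightarrow> 'a \<Rightarrow> 'a) \<Rightarrow> ('a \<Rightarrow> 'a \<Rightarrow> 'a)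
     \<Rightarrow> ('a \<Rightarrow> 'a \<Rightarrow> 'a) \<Rightarrow> 'a \<Rightarrow> 'a \<Rightarrow> 'a \<Rightarrow> ('a \<times> 'a) set" where
  "Rrel meet join mult imp one a b = {(c, d). \<exists>n k.
     (let t = tnk meet mult imp one n k a b; ab = meet a b; aob = join a b in
       lat_le meet (mult t (meet c ab)) (meet d ab) \<and>
       lat_le meet (mult t (meet d ab)) (meet c ab) \<and>
       lat_le meet (mult t (join c aob)) (join d aob) \<and>
       lat_le meet (mult t (join d aob)) (join c aob) \<and>
       lat_le meet t (biimp meet imp c d))}"

definition lattice_congruence :: "('a \<Rightarrow> 'a \<Rightarrow> 'a) \<Rightarrow> ('a \<Rightarrow> 'a \<Rightarrow> 'a) \<Rightarrow> ('a \<times> 'a) set \<Rightarrow> bool" where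
  "lattice_congruence meet join R \<longleftrightarrow> equiv UNIV R \<and>
     (\<forall>x y u v. (x, y) \<in> R \<and> (u, v) \<in> R \<longrightarrow>
        (meet x u, meet y v) \<in> R \<and> (join x u, join y v) \<in> R)"

end

theory Submission
  imports Defs
begin

locale dlcmi =
  fixes meet join mult imp :: "'a \<Rightarrow> 'a \<Rightarrow> 'a" and one :: 'a
  assumes D: "DLCMI meet join mult imp one"
begin

lemma mc: "meet x y = meet y x" and jc: "join x y = join y x"
  and ma: "meet (meet x y) z = meet x (meet y z)"
  and ja: "join (join x y) z = join x (join y z)"
  and ab1: "meet x (join x y) = x" and ab2: "join x (meet x y) = x"
  and dist: "meet x (join y z) = join (meet x y) (meet x z)"
  and top: "meet x one = x"
  and mua: "mult (mult x y) z = mult x (mult y z)"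
  and muc: "mult x y = mult y x" and mu1: "mult x one = x"
  and i4: "meet (imp x y) (imp x z) = imp x (meet y z)"
  and i5: "meet (imp x z) (imp y z) = imp (join x y) z"
  and i7: "mult (join x y) z = join (mult x z) (mult y z)"
  and i8: "meet (mult (imp x y) (imp y z)) (imp x z) = mult (imp x y) (imp y z)"
  using D unfolding DLCMI_def lat_le_def by auto

definition le where "le x y \<longleftrightarrow> meet x y = x"
definition less where "less x y \<longleftrightarrow> le x y \<and> \<not> le y x"

lemma mi: "meet x x = x" by (metis ab1 ab2)

lemma le_join: "le x y \<longleftrightarrow> join x y = y"
  unfolding le_def by (metis ab1 ab2 mc jc)

sublocale L: distrib_lattice meet le less join
proof
  show "less x y = (le x y \<and> \<not> le y x)" for x y by (simp add: less_def)
  show "le x x" for x by (simp add: le_def mi)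
  show "le x y \<Longrightarrow> le y z \<Longrightarrow> le x z" for x y z unfolding le_def by (metis ma)
  show "le x y \<Longrightarrow> le y x \<Longrightarrow> x = y" for x y unfolding le_def by (metis mc)
  show "le (meet x y) x" for x y unfolding le_def by (metis ma mc mi)
  show "le (meet x y) y" for x y unfolding le_def by (metis ma mi)
  show "le x y \<Longrightarrow> le x z \<Longrightarrow> le x (meet y z)" for x y z unfolding le_def by (metis ma)
  show "le x (join x y)" for x y unfolding le_def by (metis ab1)
  show "le y (join x y)" for x y unfolding le_def by (metis ab1 jc)
  show "le y x \<Longrightarrow> le z x \<Longrightarrow> le (join y z) x" for x y z unfolding le_join by (metis ja)
  show "join x (meet y z) = meet (join x y) (join x z)" for x y z
    by (metis ab1 ab2 dist ja jc ma mc)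
qed

lemma i6: "imp x x = one" using D unfolding DLCMI_def by auto
lemma mu1': "mult one x = x" by (metis muc mu1)

lemma one_top: "le x one" by (simp add: le_def top)

lemma mult_mono1: "le x y \<Longrightarrow> le (mult x z) (mult y z)"
  by (metis le_join i7)

lemma mult_mono2: "le x y \<Longrightarrow> le (mult z x) (mult z y)"
  by (metis mult_mono1 muc)

lemma mult_mono: "le x y \<Longrightarrow> le u v \<Longrightarrow> le (mult x u) (mult y v)"
  by (metis mult_mono1 mult_mono2 L.order_trans)

lemma mult_le1: "le (mult x y) x"
  by (metis mult_mono2 one_top mu1)

lemma mult_le2: "le (mult x y) y"
  by (metis mult_le1 muc)

lemma mult_distr2: "mult z (join x y) = join (mult z x) (mult z y)"
  by (metis i7 muc)

lemma imp_mono2: "le y z \<Longrightarrow> le (imp x y) (imp x z)"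
  unfolding le_def by (metis i4)

lemma imp_anti1: "le x y \<Longrightarrow> le (imp y z) (imp x z)"
  by (metis i5 le_def le_join jc)

lemma imp_trans: "le (mult (imp x y) (imp y z)) (imp x z)"
  using i8 le_def by blast

definition P where "P t c d p q \<longleftrightarrow>
  le (mult t (meet c p)) (meet d p) \<and> le (mult t (meet d p)) (meet c p) \<and>
  le (mult t (join c q)) (join d q) \<and> le (mult t (join d q)) (join c q) \<and>
  le t (biimp meet imp c d)"

lemma P_mono: "P t c d p q \<Longrightarrow> le s t \<Longrightarrow> P s c d p q"
  unfolding P_def by (meson L.order_trans mult_mono1)

lemma P_refl: "P one c c p q"
  unfolding P_def biimp_def by (simp add: mi le_def i6 mu1')

lemma P_sym: "P t c d p q \<Longrightarrow> P t d c p q"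
  unfolding P_def biimp_def by (simp add: mc)

lemma P_trans: assumes "P s c d p q" "P u d e p q" shows "P (mult s u) c e p q"
proof -
  have b1: "le s (imp c d)" "le s (imp d c)" "le u (imp d e)" "le u (imp e d)"
    using assms unfolding P_def biimp_def by auto
  have "le (mult s u) (imp c e)"
    by (meson L.order_trans b1 imp_trans mult_mono)
  moreover have "le (mult s u) (imp e c)"
    by (metis L.order_trans b1 imp_trans mult_mono muc)
  ultimately have "le (mult s u) (biimp meet imp c e)" unfolding biimp_def by simp
  moreover have "le (mult (mult s u) X) Z"
    if "le (mult s X) Y" "le (mult u Y) Z" for X Y Z
  proof -
    have "mult (mult s u) X = mult u (mult s X)" by (metis mua muc)
    then show ?thesis using mult_mono2[OF that(1), of u] that(2) L.order_trans by metis
  qed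
  moreover have "le (mult (mult s u) X) Z"
    if "le (mult u X) Y" "le (mult s Y) Z" for X Y Z
  proof -
    have "mult (mult s u) X = mult s (mult u X)" by (metis mua)
    then show ?thesis using mult_mono2[OF that(1), of s] that(2) L.order_trans by metis
  qed
  moreover note assms[unfolded P_def]
  ultimately show ?thesis unfolding P_def by blast
qed

lemma P_meet: assumes "P s x y p q" "P u x' y' p q"
  shows "P (mult s u) (meet x x') (meet y y') p q"
proof -
  have su1: "le (mult s u) s" and su2: "le (mult s u) u" by (rule mult_le1, rule mult_le2)
  have A: "le (mult (mult s u) (meet (meet x x') p)) (meet (meet y y') p)" if "P s x y p q" "P u x' y' p q" for x x' y y'
  proof -
    have "le (mult (mult s u) (meet (meet x x') p)) (mult s (meet x p))"
      by (rule mult_mono[OF su1]) (meson L.inf_mono L.inf_le1 L.inf_le2 L.order_refl)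
    also have "le \<dots> (meet y p)" using that P_def by blast
    finally have 1: "le (mult (mult s u) (meet (meet x x') p)) (meet y p)" .
    have "le (mult (mult s u) (meet (meet x x') p)) (mult u (meet x' p))"
      by (rule mult_mono[OF su2]) (meson L.inf_mono L.inf_le1 L.inf_le2 L.order_refl)
    also have "le \<dots> (meet y' p)" using that P_def by blast
    finally have 2: "le (mult (mult s u) (meet (meet x x') p)) (meet y' p)" .
    from 1 2 show ?thesis by simp
  qed
  have B: "le (mult (mult s u) (join (meet x x') q)) (join (meet y y') q)" if "P s x y p q" "P u x' y' p q" for x x' y y'
  proof -
    have "le (mult (mult s u) (join (meet x x') q)) (mult s (join x q))"
      by (rule mult_mono[OF su1]) (meson L.inf_le1 L.sup_mono L.order_refl)
    also have "le \<dots> (join y q)" using that P_def by blast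
    finally have 1: "le (mult (mult s u) (join (meet x x') q)) (join y q)" .
    have "le (mult (mult s u) (join (meet x x') q)) (mult u (join x' q))"
      by (rule mult_mono[OF su2]) (meson L.inf_le2 L.sup_mono L.order_refl)
    also have "le \<dots> (join y' q)" using that P_def by blast
    finally have 2: "le (mult (mult s u) (join (meet x x') q)) (join y' q)" .
    from 1 2 show ?thesis by (metis L.le_inf_iff L.sup_inf_distrib2)
  qed
  have C: "le (mult s u) (imp (meet x x') (meet y y'))" if "P s x y p q" "P u x' y' p q" for x x' y y'
  proof -
    have "le (mult s u) (imp x y)" "le (mult s u) (imp x' y')"
      using that su1 su2 unfolding P_def biimp_def by (meson L.le_inf_iff L.order_trans)+
    then have "le (mult s u) (imp (meet x x') y)" "le (mult s u) (imp (meet x x') y')"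
      by (meson L.inf_le1 L.inf_le2 L.order_trans imp_anti1)+
    then show ?thesis by (metis i4 L.le_inf_iff)
  qed
  have "P s y x p q" "P u y' x' p q" using assms P_sym by auto
  note r = this
  show ?thesis unfolding P_def[of "mult s u"] biimp_def
    using A[OF assms] B[OF assms] C[OF assms] A[OF r] B[OF r] C[OF r] L.le_infI by blast
qed

lemma P_join: assumes "P s x y p q" "P u x' y' p q"
  shows "P (mult s u) (join x x') (join y y') p q"
proof -
  have su1: "le (mult s u) s" and su2: "le (mult s u) u" by (rule mult_le1, rule mult_le2)
  have A: "le (mult (mult s u) (meet (join x x') p)) (meet (join y y') p)" if "P s x y p q" "P u x' y' p q" for x x' y y'
  proof -
    have "mult (mult s u) (meet (join x x') p) = join (mult (mult s u) (meet x p)) (mult (mult s u) (meet x' p))"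
      by (metis L.inf_sup_distrib2 mult_distr2)
    moreover have "le (mult (mult s u) (meet x p)) (meet y p)"
      using mult_mono[OF su1 L.order_refl] that P_def L.order_trans by blast
    moreover have "le (mult (mult s u) (meet x' p)) (meet y' p)"
      using mult_mono[OF su2 L.order_refl] that P_def L.order_trans by blast
    ultimately show ?thesis by (metis L.inf_sup_distrib2 L.sup_mono)
  qed
  have B: "le (mult (mult s u) (join (join x x') q)) (join (join y y') q)" if "P s x y p q" "P u x' y' p q" for x x' y y'
  proof -
    have e: "join (join x x') q = join (join x q) (join x' q)" for x x'
      by (metis L.sup_assoc L.sup_commute L.sup_left_commute L.sup.idem)
    have "mult (mult s u) (join (join x x') q) = join (mult (mult s u) (join x q)) (mult (mult s u) (join x' q))"
      by (metis e mult_distr2)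
    moreover have "le (mult (mult s u) (join x q)) (join y q)"
      using mult_mono[OF su1 L.order_refl] that P_def L.order_trans by blast
    moreover have "le (mult (mult s u) (join x' q)) (join y' q)"
      using mult_mono[OF su2 L.order_refl] that P_def L.order_trans by blast
    ultimately show ?thesis by (metis e L.sup_mono)
  qed
  have C: "le (mult s u) (imp (join x x') (join y y'))" if "P s x y p q" "P u x' y' p q" for x x' y y'
  proof -
    have "le (mult s u) (imp x y)" "le (mult s u) (imp x' y')"
      using that su1 su2 unfolding P_def biimp_def by (meson L.le_inf_iff L.order_trans)+
    then have "le (mult s u) (imp x (join y y'))" "le (mult s u) (imp x' (join y y'))"
      by (meson L.sup_ge1 L.sup_ge2 L.order_trans imp_mono2)+
    then show ?thesis by (metis i5 L.le_inf_iff)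
  qed
  have "P s y x p q" "P u y' x' p q" using assms P_sym by auto
  note r = this
  show ?thesis unfolding P_def[of "mult s u"] biimp_def
    using A[OF assms] B[OF assms] C[OF assms] A[OF r] B[OF r] C[OF r] L.le_infI by blast
qed

lemma tn_anti: "m \<le> n \<Longrightarrow> le (tn meet imp one n a b) (tn meet imp one m a b)"
proof (induction n)
  case 0 then show ?case by simp
next
  case (Suc n)
  show ?case
  proof (cases "m = Suc n")
    case False
    then have "m \<le> n" using Suc.prems by simp
    then show ?thesis using Suc.IH by (simp add: L.le_infI1)
  qed simp
qed

lemma mpow_mono: "le x y \<Longrightarrow> le (mpow mult one x k) (mpow mult one y k)"
  by (induction k) (simp_all add: mult_mono)

lemma mpow_add: "mpow mult one x (k1 + k2) = mult (mpow mult one x k1) (mpow mult one x k2)"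
  by (induction k1) (simp_all add: mu1' mua)

lemma Rrel_iff: "(c, d) \<in> Rrel meet join mult imp one a b \<longleftrightarrow>
   (\<exists>n k. P (mpow mult one (tn meet imp one n a b) k) c d (meet a b) (join a b))"
  unfolding Rrel_def tnk_def P_def Let_def lat_le_def le_def by simp

lemma Rrel_common:
  assumes "(c, d) \<in> Rrel meet join mult imp one a b" "(c', d') \<in> Rrel meet join mult imp one a b"
  obtains n k1 k2 where "P (mpow mult one (tn meet imp one n a b) k1) c d (meet a b) (join a b)"
    "P (mpow mult one (tn meet imp one n a b) k2) c' d' (meet a b) (join a b)"
proof -
  obtain n1 k1 n2 k2 where 1: "P (mpow mult one (tn meet imp one n1 a b) k1) c d (meet a b) (join a b)"
    and 2: "P (mpow mult one (tn meet imp one n2 a b) k2) c' d' (meet a b) (join a b)"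
    using assms Rrel_iff by blast
  let ?n = "max n1 n2"
  have "P (mpow mult one (tn meet imp one ?n a b) k1) c d (meet a b) (join a b)"
    by (rule P_mono[OF 1 mpow_mono[OF tn_anti]]) simp
  moreover have "P (mpow mult one (tn meet imp one ?n a b) k2) c' d' (meet a b) (join a b)"
    by (rule P_mono[OF 2 mpow_mono[OF tn_anti]]) simp
  ultimately show ?thesis using that by blast
qed

lemma main: "(a, b) \<in> Rrel meet join mult imp one a b \<and>
         lattice_congruence meet join (Rrel meet join mult imp one a b)"
proof -
  let ?R = "Rrel meet join mult imp one a b"
  have ab: "(a, b) \<in> ?R"
  proof -
    have "P (mpow mult one (tn meet imp one 0 a b) 1) a b (meet a b) (join a b)"
    proof -
      have e: "meet a (meet a b) = meet a b" "meet b (meet a b) = meet a b"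
        "join a (join a b) = join a b" "join b (join a b) = join a b"
        by (simp_all add: L.inf_absorb2 L.sup_absorb2)
      show ?thesis unfolding P_def e One_nat_def mpow.simps mu1 tn.simps using mult_le2 L.order_refl by blast
    qed
    then show ?thesis using Rrel_iff by blast
  qed
  have refl: "(c, c) \<in> ?R" for c
  proof -
    have "P (mpow mult one (tn meet imp one 0 a b) 0) c c (meet a b) (join a b)"
      using P_refl by simp
    then show ?thesis using Rrel_iff by blast
  qed
  have sym: "(c, d) \<in> ?R \<Longrightarrow> (d, c) \<in> ?R" for c d using Rrel_iff P_sym by blast
  have trans: "(c, d) \<in> ?R \<Longrightarrow> (d, e) \<in> ?R \<Longrightarrow> (c, e) \<in> ?R" for c d e
  proof -
    assume h: "(c, d) \<in> ?R" "(d, e) \<in> ?R"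
    obtain n k1 k2 where "P (mpow mult one (tn meet imp one n a b) k1) c d (meet a b) (join a b)"
      "P (mpow mult one (tn meet imp one n a b) k2) d e (meet a b) (join a b)"
      using Rrel_common[OF h] by blast
    then have "P (mpow mult one (tn meet imp one n a b) (k1 + k2)) c e (meet a b) (join a b)"
      using P_trans mpow_add by simp
    then show ?thesis using Rrel_iff by blast
  qed
  have cong: "(meet x u, meet y v) \<in> ?R \<and> (join x u, join y v) \<in> ?R"
    if h: "(x, y) \<in> ?R" "(u, v) \<in> ?R" for x y u v
  proof -
    obtain n k1 k2 where "P (mpow mult one (tn meet imp one n a b) k1) x y (meet a b) (join a b)"
      "P (mpow mult one (tn meet imp one n a b) k2) u v (meet a b) (join a b)"
      using Rrel_common[OF h] by blast
    then have "P (mpow mult one (tn meet imp one n a b) (k1 + k2)) (meet x u) (meet y v) (meet a b) (join a b)"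
      "P (mpow mult one (tn meet imp one n a b) (k1 + k2)) (join x u) (join y v) (meet a b) (join a b)"
      using P_meet P_join mpow_add by simp_all
    then show ?thesis using Rrel_iff by blast
  qed
  have "equiv UNIV ?R"
    by (rule equivI) (auto simp: refl_on_def sym_def trans_def intro: refl sym trans)
  then show ?thesis using ab cong unfolding lattice_congruence_def by blast
qed

end

theorem lemma3p6:
  fixes meet join mult imp :: "'a \<Rightarrow> 'a \<Rightarrow> 'a" and one :: 'a and a b :: 'a
  assumes "DLCMI meet join mult imp one"
  shows "(a, b) \<in> Rrel meet join mult imp one a b \<and>
         lattice_congruence meet join (Rrel meet join mult imp one a b)"
proof -
  interpret dlcmi meet join mult imp one by (rule dlcmi.intro[OF assms])
  show ?thesis by (rule main)
qed

end
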